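(* Let $n$ be a non-negative integer and $r,s\in\mathbb{C}\setminus\mathbb{Z}^{-}$ with $s\ne0$ and $r-s\notin\mathbb{Z}^{-}$. Then \[ \sum_{k=0}^{n-1}\frac{H_{n-1-k}}{(k+s)\binom{r+k+1}{r-s+1}}=\frac{H_n}{s\binom{r}{s}}-\frac{1}{r-s+1}\sum_{k=1}^{n}\frac{1}{k\binom{n-k+r}{r-s+1}}. \] In particular, for every real $s\geq1$, \[ \sum_{k=0}^{n}\frac{H_{n-k}}{(k+s)(k+1+s)}=\frac{n+1}{s(n+1+s)}H_{n+1}-\frac{1}{n+1+s}(H_{n+s}-H_{s-1}) \] and \[ \sum_{k=0}^{n}\frac{H_{n-k}}{(k+s)(k+1+s)(k+2+s)}=\frac12\left(\frac{H_{n+1}}{s(s+1)}-\frac{1}{n+1+s}(H_{n+1}+H_{n+s}-H_{s-1})+\frac{1}{n+2+s}(H_{n+1}+H_{n+1+s}-H_s)\right). \]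
   Context: $\mathbb{Z}^{-}$ denotes the set of negative integers. For complex $z$ not a negative integer, $H_z=\psi(z+1)+\gamma$ ($\psi$ the digamma function, $\gamma$ Euler's constant); for integers $m\geq 0$, $H_m=\sum_{j=1}^m1/j$. Binomial coefficients with complex entries: $\binom{x}{y}=\frac{\Gamma(x+1)}{\Gamma(y+1)\Gamma(x-y+1)}$. *)

theory Defs
  imports "HOL-Analysis.Analysis"
begin

definition neg_Ints :: "'a :: ring_1 set" where
  "neg_Ints = {of_int k | k. k < 0}"

definition Hz :: "'a :: {real_normed_field, banach} \<Rightarrow> 'a" where
  "Hz z = Digamma (z + 1) + of_real euler_mascheroni"

text \<open>Binomial coefficient with complex entries, Gamma(x+1)/(Gamma(y+1) Gamma(x-y+1)),
  the reciprocal Gamma being used in the denominator (1/Gamma = 0 at poles).\<close>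
definition cbinom :: "complex \<Rightarrow> complex \<Rightarrow> complex" where
  "cbinom x y = Gamma (x + 1) * rGamma (y + 1) * rGamma (x - y + 1)"

end

theory Submission imports Defs begin

lemma sbp:
  fixes b :: "nat \<Rightarrow> 'a::real_normed_field"
  shows "(\<Sum>k<n. harm (n-1-k) * (b k - b (Suc k))) = harm n * b 0 - (\<Sum>k=1..n. b (n-k) / of_nat k)"
proof (induction n arbitrary: b)
  case 0
  then show ?case by (simp add: harm_def)
next
  case (Suc n)
  define X where "X = (\<Sum>k<n. harm (n-1-k) * (b (Suc k) - b (Suc (Suc k))))"
  define Y where "Y = (\<Sum>k=1..n. b (Suc (n-k)) / of_nat k)"
  have IH: "X = harm n * b 1 - Y"
    using Suc.IH[of "\<lambda>k. b (Suc k)"] unfolding X_def Y_def by simp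
  have A: "(\<Sum>k<Suc n. harm (Suc n-1-k) * (b k - b (Suc k))) = harm n * (b 0 - b 1) + X"
    unfolding X_def by (subst sum.lessThan_Suc_shift) simp
  have B: "(\<Sum>k=1..Suc n. b (Suc n-k) / of_nat k) = Y + b 0 / of_nat (Suc n)"
    unfolding Y_def by (simp add: Suc_diff_le)
  have H: "harm (Suc n) * b 0 = harm n * b 0 + b 0 / of_nat (Suc n)"
    by (simp add: harm_Suc algebra_simps divide_inverse)
  show ?case unfolding A B H IH by (simp add: algebra_simps)
qed


lemma np1: assumes "(x::complex) \<notin> neg_Ints" shows "x + of_nat k + 1 \<notin> \<int>\<^sub>\<le>\<^sub>0"
proof
  assume "x + of_nat k + 1 \<in> \<int>\<^sub>\<le>\<^sub>0"
  then obtain m :: int where m: "m \<le> 0" "x + of_nat k + 1 = of_int m" by (auto elim!: nonpos_Ints_cases)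
  then have "x = of_int (m - int k - 1)" by (simp add: algebra_simps)
  moreover have "m - int k - 1 < 0" using m by simp
  ultimately have "x \<in> neg_Ints" unfolding neg_Ints_def by blast
  with assms show False by simp
qed

lemma np2: assumes "(x::complex) \<notin> neg_Ints" "x \<noteq> 0" shows "x + of_nat k \<notin> \<int>\<^sub>\<le>\<^sub>0"
proof
  assume "x + of_nat k \<in> \<int>\<^sub>\<le>\<^sub>0"
  then obtain m :: int where m: "m \<le> 0" "x + of_nat k = of_int m" by (auto elim!: nonpos_Ints_cases)
  then have x: "x = of_int (m - int k)" by (simp add: algebra_simps)
  show False
  proof (cases "m - int k < 0")
    case True
    with x have "x \<in> neg_Ints" unfolding neg_Ints_def by blast
    with assms show False by simp
  next
    case False
    with m have "m - int k = 0" by simp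
    with x assms show False by simp
  qed
qed

lemma nz_of_np: "(z::complex) \<notin> \<int>\<^sub>\<le>\<^sub>0 \<Longrightarrow> z \<noteq> 0" by auto

lemma alg1:
  fixes z w u Gz Gw g H :: complex
  assumes "u = z - w" "z \<noteq> 0" "w \<noteq> 0" "u \<noteq> 0" "Gz \<noteq> 0" "Gw \<noteq> 0" "g \<noteq> 0"
  shows "H / (w * ((z*Gz) * ((1/g)/u) * ((1/Gw)/w))) = g*(H*(Gw*(1/Gz) - (w*Gw)*((1/Gz)/z)))"
proof -
  have "z - w \<noteq> 0" using assms by simp
  then show ?thesis unfolding assms(1) using assms(2-7) by (simp add: field_simps)
qed

lemma Gfacts:
  fixes z :: complex assumes "z \<notin> \<int>\<^sub>\<le>\<^sub>0"
  shows "Gamma (z+1) = z * Gamma z" "rGamma (z+1) = (1 / Gamma z) / z" "rGamma z = 1 / Gamma z"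
    "z \<noteq> 0" "Gamma z \<noteq> 0"
proof -
  show "Gamma (z+1) = z * Gamma z" using Gamma_plus1[OF assms] .
  show z: "z \<noteq> 0" using assms by auto
  show r: "rGamma z = 1 / Gamma z" by (simp add: rGamma_inverse_Gamma divide_inverse)
  have "rGamma (z+1) = rGamma z / z" using rGamma_plus1[of z] z by (metis nonzero_mult_div_cancel_left)
  then show "rGamma (z+1) = (1 / Gamma z) / z" using r by simp
  show "Gamma z \<noteq> 0" using Gamma_nonzero[OF assms] .
qed

lemma cpart:
  fixes r s :: complex and n :: nat
  assumes A: "r \<notin> neg_Ints" "s \<notin> neg_Ints" "s \<noteq> 0" "r - s \<notin> neg_Ints"
  shows "(\<Sum>k<n. harm (n - 1 - k) / ((of_nat k + s) * cbinom (r + of_nat k + 1) (r - s + 1)))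
            = harm n / (s * cbinom r s)
              - 1 / (r - s + 1) * (\<Sum>k=1..n. 1 / (of_nat k * cbinom (of_nat (n - k) + r) (r - s + 1)))"
proof -
  define u where "u = r - s + 1"
  define g where "g = Gamma u"
  define b where "b = (\<lambda>k::nat. Gamma (s + of_nat k) * rGamma (r + of_nat k + 1))"
  have u: "u \<notin> \<int>\<^sub>\<le>\<^sub>0" using np1[OF A(4), of 0] by (simp add: u_def)
  note U = Gfacts[OF u]
  have g: "g \<noteq> 0" "rGamma u = 1 / g" "rGamma (u+1) = (1/g)/u" using U by (simp_all add: g_def)
  have T1: "harm (n - 1 - k) / ((of_nat k + s) * cbinom (r + of_nat k + 1) (r - s + 1))
      = g * (harm (n - 1 - k) * (b k - b (Suc k)))" for k
  proof -
    define z where "z = r + of_nat k + 1"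
    define w where "w = s + of_nat k"
    have z: "z \<notin> \<int>\<^sub>\<le>\<^sub>0" unfolding z_def by (rule np1[OF A(1)])
    have w: "w \<notin> \<int>\<^sub>\<le>\<^sub>0" unfolding w_def by (rule np2[OF A(2,3)])
    note Z = Gfacts[OF z] and W = Gfacts[OF w]
    have c: "cbinom (r + of_nat k + 1) (r - s + 1) = Gamma (z+1) * rGamma (u+1) * rGamma (w+1)"
      unfolding cbinom_def z_def u_def w_def by (simp add: algebra_simps)
    have bk: "b k = Gamma w * rGamma z" unfolding b_def z_def w_def by simp
    have bS: "b (Suc k) = Gamma (w+1) * rGamma (z+1)" unfolding b_def z_def w_def by (simp add: algebra_simps)
    have ku: "u = z - w" unfolding u_def z_def w_def by simp
    have "harm (n - 1 - k) / (w * ((z * Gamma z) * ((1/g)/u) * ((1/Gamma w)/w)))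
       = g * (harm (n - 1 - k) * (Gamma w * (1/Gamma z) - (w * Gamma w) * ((1/Gamma z)/z)))"
      by (rule alg1) (use ku Z W U g in auto)
    then show ?thesis unfolding c bk bS using Z W g by (simp add: w_def add.commute)
  qed
  have T2: "1 / u * (1 / (of_nat k * cbinom (of_nat m + r) (r - s + 1))) = g * (b m / of_nat k)" for k m
  proof -
    define z where "z = r + of_nat m + 1"
    define w where "w = s + of_nat m"
    have z: "z \<notin> \<int>\<^sub>\<le>\<^sub>0" unfolding z_def by (rule np1[OF A(1)])
    have w: "w \<notin> \<int>\<^sub>\<le>\<^sub>0" unfolding w_def by (rule np2[OF A(2,3)])
    note Z = Gfacts[OF z] and W = Gfacts[OF w]
    have c: "cbinom (of_nat m + r) (r - s + 1) = Gamma z * rGamma (u+1) * rGamma w"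
      unfolding cbinom_def z_def u_def w_def by (simp add: algebra_simps)
    have bm: "b m = Gamma w * rGamma z" unfolding b_def z_def w_def by simp
    show ?thesis unfolding c bm g(3) W(3) Z(3) using Z(4,5) W(4,5) U(4) g(1) by (simp add: field_simps)
  qed
  have T0: "harm n / (s * cbinom r s) = g * (harm n * b 0)"
  proof -
    have z: "r + 1 \<notin> \<int>\<^sub>\<le>\<^sub>0" using np1[OF A(1), of 0] by simp
    have w: "s \<notin> \<int>\<^sub>\<le>\<^sub>0" using np2[OF A(2,3), of 0] by simp
    note Z = Gfacts[OF z] and W = Gfacts[OF w]
    have c: "cbinom r s = Gamma (r+1) * rGamma (s+1) * rGamma u"
      unfolding cbinom_def u_def by (simp add: algebra_simps)
    have b0: "b 0 = Gamma s * rGamma (r+1)" unfolding b_def by simp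
    show ?thesis unfolding c b0 g(2) W(2) Z(3) using Z(4,5) W(4,5) U(4) g(1) by (simp add: field_simps)
  qed
  have "(\<Sum>k<n. harm (n - 1 - k) / ((of_nat k + s) * cbinom (r + of_nat k + 1) (r - s + 1)))
      = g * (\<Sum>k<n. harm (n - 1 - k) * (b k - b (Suc k)))"
    unfolding T1 by (simp add: sum_distrib_left)
  also have "\<dots> = g * (harm n * b 0 - (\<Sum>k=1..n. b (n-k) / of_nat k))" by (simp only: sbp)
  also have "\<dots> = harm n / (s * cbinom r s) - 1 / u * (\<Sum>k=1..n. 1 / (of_nat k * cbinom (of_nat (n - k) + r) (r - s + 1)))"
    unfolding T0 right_diff_distrib sum_distrib_left T2 by (simp add: algebra_simps)
  finally show ?thesis by (simp add: u_def)
qed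

lemma dig_sum:
  fixes t :: real assumes "t > 0"
  shows "Hz (t - 1 + real N) - Hz (t - 1) = (\<Sum>j<N. 1 / (t + real j))"
proof (induction N)
  case 0 then show ?case by simp
next
  case (Suc N)
  have "Digamma (t + real N + 1) = Digamma (t + real N) + 1 / (t + real N)"
    using assms by (intro Digamma_plus1) simp
  then show ?case using Suc by (simp add: Hz_def algebra_simps)
qed

lemma pf_sum:
  fixes t :: real assumes "t > 0"
  shows "(\<Sum>k=1..N. (1 / (t + real (N - k))) / real k) = (harm N + (\<Sum>j<N. 1 / (t + real j))) / (real N + t)"
proof -
  have "(\<Sum>k=1..N. (1 / (t + real (N - k))) / real k) = (\<Sum>k=1..N. (1 / real k + 1 / (t + real (N - k))) / (real N + t))"
  proof (intro sum.cong refl)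
    fix k assume k: "k \<in> {1..N}"
    have e: "real N + t = real k + real (N - k) + t" using k by auto
    have gen: "(1 / (t + m)) / x = (1 / x + 1 / (t + m)) / (x + m + t)" if "x > 0" "m \<ge> 0" for x m :: real
    proof -
      have "t + m \<noteq> 0" "x + m + t \<noteq> 0" "x \<noteq> 0" using that assms by auto
      then have "1 / x + 1 / (t + m) = (x + m + t) / (x * (t + m))" by (simp add: field_simps)
      then show ?thesis using \<open>x + m + t \<noteq> 0\<close> by simp
    qed
    show "(1 / (t + real (N - k))) / real k = (1 / real k + 1 / (t + real (N - k))) / (real N + t)"
      unfolding e using k by (intro gen) auto
  qed
  also have "\<dots> = ((\<Sum>k=1..N. 1 / real k) + (\<Sum>k=1..N. 1 / (t + real (N - k)))) / (real N + t)"
    by (simp only: sum_divide_distrib[symmetric] sum.distrib)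
  also have "(\<Sum>k=1..N. 1 / real k) = harm N" by (simp add: harm_def divide_inverse)
  also have "(\<Sum>k=1..N. 1 / (t + real (N - k))) = (\<Sum>k<N. 1 / (t + real (N - Suc k)))"
    by (simp add: sum.atLeast1_atMost_eq)
  also have "\<dots> = (\<Sum>j<N. 1 / (t + real j))"
    by (rule sum.nat_diff_reindex)
  finally show ?thesis .
qed


lemma alg_r1: fixes x h :: real assumes "x > 0"
  shows "h / (x * (x + 1)) = h * (1 / x - 1 / (x + 1))"
proof -
  have "x + 1 > 0" using assms by simp
  then show ?thesis using assms by (simp add: field_simps)
qed

lemma alg_r2: fixes x h :: real assumes "x > 0"
  shows "h / (x * (x + 1) * (x + 2)) = h * (1 / (2 * x * (x + 1)) - 1 / (2 * (x + 1) * (x + 1 + 1)))"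
proof -
  define y where "y = x + 1"
  define z where "z = x + 2"
  have nz: "x \<noteq> 0" "y \<noteq> 0" "z \<noteq> 0" using assms by (simp_all add: y_def z_def)
  have e: "x + 1 + 1 = z" unfolding z_def by simp
  have "h * (1 / (2 * x * y) - 1 / (2 * y * z)) = h * (z - x) / (2 * x * y * z)"
    using nz by (simp add: field_simps)
  also have "z - x = 2" unfolding z_def by simp
  also have "h * 2 / (2 * x * y * z) = h / (x * y * z)" by simp
  finally have g: "h * (1 / (2 * x * y) - 1 / (2 * y * z)) = h / (x * y * z)" .
  have e2: "x + 1 + 1 = x + 2" by simp
  from g[symmetric] show ?thesis unfolding y_def z_def e2 .
qed

lemma alg_r3: fixes y k :: real assumes "y > 0"
  shows "(1 / (2 * y * (y + 1))) / k = 1 / 2 * ((1 / y) / k - (1 / (y + 1)) / k)"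
proof -
  have "y + 1 > 0" using assms by simp
  define w where "w = y + 1"
  have nz: "y \<noteq> 0" "w \<noteq> 0" using assms by (simp_all add: w_def)
  have "1 / y - 1 / w = (w - y) / (y * w)" using nz by (simp add: field_simps)
  also have "w - y = 1" unfolding w_def by simp
  finally have "1 / y - 1 / w = 1 / (y * w)" .
  have "1 / 2 * ((1 / y) / k - (1 / w) / k) = 1 / 2 * ((1 / y - 1 / w) / k)"
    by (simp only: diff_divide_distrib)
  also have "\<dots> = 1 / 2 * ((1 / (y * w)) / k)" unfolding \<open>1 / y - 1 / w = 1 / (y * w)\<close> ..
  also have "\<dots> = (1 / (2 * y * w)) / k" by simp
  finally have "1 / 2 * ((1 / y) / k - (1 / w) / k) = (1 / (2 * y * w)) / k" .
  then show ?thesis unfolding w_def by simp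
qed

lemma rpart1:
  fixes s :: real and n :: nat assumes s: "s \<ge> 1"
  shows "(\<Sum>k=0..n. harm (n - k) / ((real k + s) * (real k + 1 + s)))
              = (real n + 1) / (s * (real n + 1 + s)) * harm (n + 1)
                - 1 / (real n + 1 + s) * (Hz (real n + s) - Hz (s - 1))"
proof -
  define b where "b = (\<lambda>k::nat. 1 / (s + real k))"
  have "(\<Sum>k=0..n. harm (n - k) / ((real k + s) * (real k + 1 + s)))
      = (\<Sum>k<Suc n. harm (Suc n - 1 - k) * (b k - b (Suc k)))"
    unfolding atLeast0AtMost lessThan_Suc_atMost[symmetric]
  proof (intro sum.cong refl)
    fix k assume "k \<in> {..<Suc n}"
    have x: "real k + s > 0" using s by auto
    show "harm (n - k) / ((real k + s) * (real k + 1 + s)) = harm (Suc n - 1 - k) * (b k - b (Suc k))"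
      using alg_r1[OF x, of "harm (n - k)"] unfolding b_def by (simp add: algebra_simps)
  qed
  also have "\<dots> = harm (Suc n) * b 0 - (\<Sum>k=1..Suc n. b (Suc n - k) / of_nat k)" by (rule sbp)
  also have "(\<Sum>k=1..Suc n. b (Suc n - k) / of_nat k) = (harm (Suc n) + (\<Sum>j<Suc n. 1 / (s + real j))) / (real (Suc n) + s)"
    unfolding b_def using pf_sum[of s "Suc n"] s by simp
  also have "(\<Sum>j<Suc n. 1 / (s + real j)) = Hz (real n + s) - Hz (s - 1)"
    using dig_sum[of s "Suc n"] s by (simp add: algebra_simps)
  finally have e: "(\<Sum>k=0..n. harm (n - k) / ((real k + s) * (real k + 1 + s))) =
     harm (Suc n) * (1 / s) - (harm (Suc n) + (Hz (real n + s) - Hz (s - 1))) / (real (Suc n) + s)"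
    by (simp add: b_def)
  define H where "H = (harm (Suc n) :: real)"
  define D where "D = Hz (real n + s) - Hz (s - 1)"
  have p: "s > 0" "real n + 1 + s > 0" using s by auto
  have h: "harm (n + 1) = H" unfolding H_def by simp
  define A where "A = real n + 1 + s"
  have a: "real (Suc n) + s = A" "real n + 1 + s = A" unfolding A_def by simp_all
  have nz: "s \<noteq> 0" "A \<noteq> 0" using p unfolding A_def by simp_all
  have "H * (1 / s) - (H + D) / A = H * (A - s) / (s * A) - D / A"
    using nz by (simp add: field_simps)
  also have "A - s = real n + 1" unfolding A_def by simp
  finally have g: "H * (1 / s) - (H + D) / A = (real n + 1) / (s * A) * H - 1 / A * D" by simp
  show ?thesis unfolding e h H_def[symmetric] D_def[symmetric] a by (rule g)
qed

lemma rpart2: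
  fixes s :: real and n :: nat assumes s: "s \<ge> 1"
  shows "(\<Sum>k=0..n. harm (n - k) / ((real k + s) * (real k + 1 + s) * (real k + 2 + s)))
              = 1 / 2 * (harm (n + 1) / (s * (s + 1))
                  - 1 / (real n + 1 + s) * (harm (n + 1) + Hz (real n + s) - Hz (s - 1))
                  + 1 / (real n + 2 + s) * (harm (n + 1) + Hz (real n + 1 + s) - Hz s))"
proof -
  define b where "b = (\<lambda>k::nat. 1 / (2 * (s + real k) * (s + real k + 1)))"
  have "(\<Sum>k=0..n. harm (n - k) / ((real k + s) * (real k + 1 + s) * (real k + 2 + s)))
      = (\<Sum>k<Suc n. harm (Suc n - 1 - k) * (b k - b (Suc k)))"
    unfolding atLeast0AtMost lessThan_Suc_atMost[symmetric]
  proof (intro sum.cong refl)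
    fix k assume "k \<in> {..<Suc n}"
    have x: "real k + s > 0" using s by auto
    show "harm (n - k) / ((real k + s) * (real k + 1 + s) * (real k + 2 + s)) = harm (Suc n - 1 - k) * (b k - b (Suc k))"
      using alg_r2[OF x, of "harm (n - k)"] unfolding b_def by (simp add: algebra_simps)
  qed
  also have "\<dots> = harm (Suc n) * b 0 - (\<Sum>k=1..Suc n. b (Suc n - k) / of_nat k)" by (rule sbp)
  also have "(\<Sum>k=1..Suc n. b (Suc n - k) / of_nat k) = 1 / 2 * ((\<Sum>k=1..Suc n. (1 / (s + real (Suc n - k))) / real k)
        - (\<Sum>k=1..Suc n. (1 / ((s + 1) + real (Suc n - k))) / real k))"
    unfolding sum_subtractf[symmetric] sum_distrib_left
  proof (intro sum.cong refl)
    fix k assume "k \<in> {1..Suc n}"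
    have y: "s + real (Suc n - k) > 0" using s by auto
    show "b (Suc n - k) / real k = 1 / 2 * ((1 / (s + real (Suc n - k))) / real k - (1 / ((s + 1) + real (Suc n - k))) / real k)"
      using alg_r3[OF y, of "real k"] unfolding b_def by (simp add: algebra_simps)
  qed
  also have "(\<Sum>k=1..Suc n. (1 / (s + real (Suc n - k))) / real k) = (harm (Suc n) + (\<Sum>j<Suc n. 1 / (s + real j))) / (real (Suc n) + s)"
    using pf_sum[of s "Suc n"] s by simp
  also have "(\<Sum>k=1..Suc n. (1 / ((s + 1) + real (Suc n - k))) / real k) = (harm (Suc n) + (\<Sum>j<Suc n. 1 / ((s + 1) + real j))) / (real (Suc n) + (s + 1))"
    using pf_sum[of "s + 1" "Suc n"] s by simp
  also have "(\<Sum>j<Suc n. 1 / (s + real j)) = Hz (real n + s) - Hz (s - 1)"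
    using dig_sum[of s "Suc n"] s by (simp add: algebra_simps)
  also have "(\<Sum>j<Suc n. 1 / ((s + 1) + real j)) = Hz (real n + 1 + s) - Hz s"
    using dig_sum[of "s + 1" "Suc n"] s by (simp add: algebra_simps)
  finally have e: "(\<Sum>k=0..n. harm (n - k) / ((real k + s) * (real k + 1 + s) * (real k + 2 + s))) =
     harm (Suc n) * b 0 - 1 / 2 * ((harm (Suc n) + (Hz (real n + s) - Hz (s - 1))) / (real (Suc n) + s)
       - (harm (Suc n) + (Hz (real n + 1 + s) - Hz s)) / (real (Suc n) + (s + 1)))" .
  define H where "H = (harm (Suc n) :: real)"
  define D where "D = Hz (real n + s) - Hz (s - 1)"
  define D2 where "D2 = Hz (real n + 1 + s) - Hz s"
  have p: "s > 0" "s + 1 > 0" "real n + 1 + s > 0" "real n + 2 + s > 0" using s by auto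
  have e2: "harm (n + 1) + Hz (real n + s) - Hz (s - 1) = H + D" "harm (n + 1) + Hz (real n + 1 + s) - Hz s = H + D2"
    unfolding H_def D_def D2_def by simp_all
  define A where "A = real n + 1 + s"
  have a: "real (Suc n) + s = A" "real (Suc n) + (s + 1) = A + 1" "real n + 2 + s = A + 1" "real n + 1 + s = A"
    unfolding A_def by simp_all
  have h: "harm (Suc n) = H" unfolding H_def by simp
  have h2: "harm (n + 1) = H" unfolding H_def by simp
  have h2: "harm (n + 1) = H" unfolding H_def by simp
  have b0: "b 0 = 1 / 2 * (1 / (s * (s + 1)))" unfolding b_def by simp
  define P where "P = 1 / (s * (s + 1))"
  define Q where "Q = 1 / A"
  define R where "R = 1 / (A + 1)"
  have f: "(H + D) / A = Q * (H + D)" "(H + D2) / (A + 1) = R * (H + D2)" "H / (s * (s + 1)) = H * P"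
    "1 / A * (H + D) = Q * (H + D)" "1 / (A + 1) * (H + D2) = R * (H + D2)"
    "1 / 2 * (1 / (s * (s + 1))) = P / 2"
    unfolding P_def Q_def R_def by simp_all
  show ?thesis unfolding e h D_def[symmetric] D2_def[symmetric] unfolding e2 unfolding a b0 h2 f
    by (simp only: algebra_simps)
qed

theorem corollary14:
  fixes n :: nat
  shows "(\<forall>r s :: complex. r \<notin> neg_Ints \<and> s \<notin> neg_Ints \<and> s \<noteq> 0 \<and> r - s \<notin> neg_Ints \<longrightarrow>
            (\<Sum>k<n. harm (n - 1 - k) / ((of_nat k + s) * cbinom (r + of_nat k + 1) (r - s + 1)))
            = harm n / (s * cbinom r s)
              - 1 / (r - s + 1) * (\<Sum>k=1..n. 1 / (of_nat k * cbinom (of_nat (n - k) + r) (r - s + 1))))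
       \<and> (\<forall>s :: real. s \<ge> 1 \<longrightarrow>
            (\<Sum>k=0..n. harm (n - k) / ((real k + s) * (real k + 1 + s)))
              = (real n + 1) / (s * (real n + 1 + s)) * harm (n + 1)
                - 1 / (real n + 1 + s) * (Hz (real n + s) - Hz (s - 1))
            \<and> (\<Sum>k=0..n. harm (n - k) / ((real k + s) * (real k + 1 + s) * (real k + 2 + s)))
              = 1 / 2 * (harm (n + 1) / (s * (s + 1))
                  - 1 / (real n + 1 + s) * (harm (n + 1) + Hz (real n + s) - Hz (s - 1))
                  + 1 / (real n + 2 + s) * (harm (n + 1) + Hz (real n + 1 + s) - Hz s)))"
  using cpart rpart1 rpart2 by blast

end
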